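(* If an equivariant map $f:X\to Y$ of nominal sets is surjective and has orbit-finite fibres, then $f$ is safe.
   Context: Nominal sets over a countably infinite set $\mathcal V$ of names; $\mathsf{supp}(u)$ is the least finite support. An orbit is an equivalence class of $u\sim\pi\cdot u$. $f$ has orbit-finite fibres if each fibre $f^{-1}(v)$ is contained in finitely many orbits of $X$. $u\in X$ is $f$-safe if $|\mathsf{supp}(u)|=\max\{|\mathsf{supp}(v)|:v\in f^{-1}(f(u))\}$ (the maximum existing); $f$ is safe if every element of $Y$ has an $f$-safe preimage. *)

theory Defs
  imports Main "HOL-Library.Countable_Set"
begin

definition fin_perm :: "('n \<Rightarrow> 'n) \<Rightarrow> bool" where
  "fin_perm \<pi> \<longleftrightarrow> bij \<pi> \<and> finite {a. \<pi> a \<noteq> a}"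

definition supports :: "(('n \<Rightarrow> 'n) \<Rightarrow> 'x \<Rightarrow> 'x) \<Rightarrow> 'n set \<Rightarrow> 'x \<Rightarrow> bool" where
  "supports act A x \<longleftrightarrow> (\<forall>\<pi>. fin_perm \<pi> \<and> (\<forall>a\<in>A. \<pi> a = a) \<longrightarrow> act \<pi> x = x)"

definition nominal_set :: "(('n \<Rightarrow> 'n) \<Rightarrow> 'x \<Rightarrow> 'x) \<Rightarrow> bool" where
  "nominal_set act \<longleftrightarrow>
     (\<forall>x. act id x = x) \<and>
     (\<forall>\<pi> \<sigma> x. fin_perm \<pi> \<and> fin_perm \<sigma> \<longrightarrow> act (\<pi> \<circ> \<sigma>) x = act \<pi> (act \<sigma> x)) \<and>
     (\<forall>x. \<exists>A. finite A \<and> supports act A x)"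

definition supp :: "(('n \<Rightarrow> 'n) \<Rightarrow> 'x \<Rightarrow> 'x) \<Rightarrow> 'x \<Rightarrow> 'n set" where
  "supp act x = \<Inter>{A. finite A \<and> supports act A x}"

definition equivariant ::
  "(('n \<Rightarrow> 'n) \<Rightarrow> 'x \<Rightarrow> 'x) \<Rightarrow> (('n \<Rightarrow> 'n) \<Rightarrow> 'y \<Rightarrow> 'y) \<Rightarrow> ('x \<Rightarrow> 'y) \<Rightarrow> bool" where
  "equivariant actX actY f \<longleftrightarrow> (\<forall>\<pi> x. fin_perm \<pi> \<longrightarrow> f (actX \<pi> x) = actY \<pi> (f x))"

definition orbit :: "(('n \<Rightarrow> 'n) \<Rightarrow> 'x \<Rightarrow> 'x) \<Rightarrow> 'x \<Rightarrow> 'x set" where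
  "orbit act x = {act \<pi> x | \<pi>. fin_perm \<pi>}"

definition orbit_finite_fibres :: "(('n \<Rightarrow> 'n) \<Rightarrow> 'x \<Rightarrow> 'x) \<Rightarrow> ('x \<Rightarrow> 'y) \<Rightarrow> bool" where
  "orbit_finite_fibres actX f \<longleftrightarrow>
     (\<forall>v. \<exists>S. finite S \<and> f -` {v} \<subseteq> \<Union> (orbit actX ` S))"

definition f_safe :: "(('n \<Rightarrow> 'n) \<Rightarrow> 'x \<Rightarrow> 'x) \<Rightarrow> ('x \<Rightarrow> 'y) \<Rightarrow> 'x \<Rightarrow> bool" where
  "f_safe actX f u \<longleftrightarrow>
     (\<forall>w. f w = f u \<longrightarrow> card (supp actX w) \<le> card (supp actX u))"

definition safe :: "(('n \<Rightarrow> 'n) \<Rightarrow> 'x \<Rightarrow> 'x) \<Rightarrow> ('x \<Rightarrow> 'y) \<Rightarrow> bool" where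
  "safe actX f \<longleftrightarrow> (\<forall>v. \<exists>u. f u = v \<and> f_safe actX f u)"

end

theory Submission
  imports Defs
begin

lemma fin_perm_comp: "fin_perm p \<Longrightarrow> fin_perm q \<Longrightarrow> fin_perm (p \<circ> q)"
  unfolding fin_perm_def
proof (intro conjI)
  assume a: "bij p \<and> finite {a. p a \<noteq> a}" "bij q \<and> finite {a. q a \<noteq> a}"
  show "bij (p \<circ> q)" using a bij_comp by blast
  have "{a. (p \<circ> q) a \<noteq> a} \<subseteq> {a. p a \<noteq> a} \<union> {a. q a \<noteq> a}" by auto
  then show "finite {a. (p \<circ> q) a \<noteq> a}" using a finite_subset by blast
qed

lemma fin_perm_inv: "fin_perm p \<Longrightarrow> fin_perm (inv p)"
  unfolding fin_perm_def
proof (intro conjI)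
  assume a: "bij p \<and> finite {a. p a \<noteq> a}"
  show "bij (inv p)" using a bij_imp_bij_inv by blast
  have "{a. inv p a \<noteq> a} \<subseteq> p ` {a. p a \<noteq> a}"
  proof
    fix a assume "a \<in> {a. inv p a \<noteq> a}"
    then have "inv p a \<noteq> a" by simp
    moreover have "p (inv p a) = a" using a by (meson bij_inv_eq_iff)
    ultimately show "a \<in> p ` {a. p a \<noteq> a}" by (metis (mono_tags, lifting) image_eqI mem_Collect_eq)
  qed
  then show "finite {a. inv p a \<noteq> a}" using a finite_subset by blast
qed

lemma supports_perm:
  assumes nom: "nominal_set act" and p: "fin_perm p" and s: "supports act A x"
  shows "supports act (p ` A) (act p x)"
  unfolding supports_def
proof (intro allI impI)
  fix s assume h: "fin_perm s \<and> (\<forall>a\<in>p ` A. s a = a)"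
  have bp: "bij p" using p fin_perm_def by blast
  define t where "t = inv p \<circ> s \<circ> p"
  have ft: "fin_perm t" unfolding t_def
    using fin_perm_comp[OF fin_perm_comp[OF fin_perm_inv[OF p]] p] h by blast
  have ip: "\<And>a. inv p (p a) = a" using bp bij_is_inj inv_f_f by metis
  have pi: "\<And>a. p (inv p a) = a" using bp bij_is_surj surj_f_inv_f by metis
  have "\<forall>a\<in>A. t a = a"
  proof
    fix a assume "a \<in> A"
    then have "s (p a) = p a" using h by blast
    then show "t a = a" unfolding t_def using ip by simp
  qed
  then have tx: "act t x = x" using s ft unfolding supports_def by blast
  have "s \<circ> p = p \<circ> t" unfolding t_def using pi by (simp add: fun_eq_iff)
  have comp: "\<And>a b y. fin_perm a \<Longrightarrow> fin_perm b \<Longrightarrow> act (a \<circ> b) y = act a (act b y)"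
    using nom unfolding nominal_set_def by blast
  have "act s (act p x) = act (s \<circ> p) x" using comp h p by simp
  also have "\<dots> = act (p \<circ> t) x" using \<open>s \<circ> p = p \<circ> t\<close> by simp
  also have "\<dots> = act p (act t x)" using comp ft p by simp
  finally show "act s (act p x) = act p x" using tx by simp
qed

lemma card_supp_le:
  assumes nom: "nominal_set act" and p: "fin_perm p"
  shows "card (supp act (act p x)) \<le> card (supp act x)"
proof -
  let ?F = "{A. finite A \<and> supports act A x}"
  have "\<exists>A. finite A \<and> supports act A x" using nom unfolding nominal_set_def by blast
  then obtain A0 where A0: "A0 \<in> ?F" by blast
  have "bij p" using p unfolding fin_perm_def by blast
  then have injp: "inj p" by (rule bij_is_inj)
  have sub: "supp act (act p x) \<subseteq> \<Inter> ((\<lambda>A. p ` A) ` ?F)"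
  proof
    fix y assume y: "y \<in> supp act (act p x)"
    show "y \<in> \<Inter> ((\<lambda>A. p ` A) ` ?F)"
    proof
      fix A assume A: "A \<in> ?F"
      define B where "B = p ` A"
      have "finite B \<and> supports act B (act p x)" using supports_perm[OF nom p] A unfolding B_def by blast
      then have b: "B \<in> {A. finite A \<and> supports act A (act p x)}" by simp
      have yy: "y \<in> \<Inter> {A. finite A \<and> supports act A (act p x)}" using y unfolding supp_def .
      show "y \<in> p ` A" using InterD[OF yy b] unfolding B_def .
    qed
  qed
  have eq: "\<Inter> ((\<lambda>A. p ` A) ` ?F) = p ` \<Inter> ?F"
  proof
    show "p ` \<Inter> ?F \<subseteq> \<Inter> ((\<lambda>A. p ` A) ` ?F)" by blast
    show "\<Inter> ((\<lambda>A. p ` A) ` ?F) \<subseteq> p ` \<Inter> ?F"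
    proof
      fix y assume y: "y \<in> \<Inter> ((\<lambda>A. p ` A) ` ?F)"
      then have "y \<in> p ` A0" using A0 by blast
      then obtain z where z: "y = p z" by blast
      have "z \<in> \<Inter> ?F"
      proof
        fix A assume "A \<in> ?F"
        then have "p z \<in> p ` A" using y z by blast
        then show "z \<in> A" using injp by (simp add: inj_image_mem_iff)
      qed
      then show "y \<in> p ` \<Inter> ?F" using z by blast
    qed
  qed
  have fin: "finite (\<Inter> ?F)" using A0 Inter_lower[OF A0] finite_subset by blast
  have "card (supp act (act p x)) \<le> card (p ` \<Inter> ?F)"
    using sub eq fin by (simp add: card_mono)
  also have "\<dots> = card (\<Inter> ?F)" using card_image[OF inj_on_subset[OF injp subset_UNIV]] .
  finally show ?thesis unfolding supp_def .
qed

theorem lemma5p31: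
  fixes actX :: "('n \<Rightarrow> 'n) \<Rightarrow> 'x \<Rightarrow> 'x"
    and actY :: "('n \<Rightarrow> 'n) \<Rightarrow> 'y \<Rightarrow> 'y"
    and f :: "'x \<Rightarrow> 'y"
  assumes "infinite (UNIV :: 'n set)" and "countable (UNIV :: 'n set)"
    and "nominal_set actX" and "nominal_set actY"
    and "equivariant actX actY f"
    and "surj f"
    and "orbit_finite_fibres actX f"
  shows "safe actX f"
  unfolding safe_def
proof
  fix v
  obtain S where S: "finite S" "f -` {v} \<subseteq> \<Union> (orbit actX ` S)"
    using assms(7) orbit_finite_fibres_def by metis
  let ?C = "(\<lambda>w. card (supp actX w)) ` (f -` {v})"
  have bnd: "?C \<subseteq> {..Max ((\<lambda>s. card (supp actX s)) ` S)}"
  proof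
    fix c assume "c \<in> ?C"
    then obtain w where w: "f w = v" "c = card (supp actX w)" by auto
    then obtain s p where sp: "s \<in> S" "fin_perm p" "w = actX p s"
      using S(2) unfolding orbit_def by blast
    have "c \<le> card (supp actX s)" using card_supp_le[OF assms(3) sp(2)] sp w by simp
    also have "\<dots> \<le> Max ((\<lambda>s. card (supp actX s)) ` S)" using S(1) sp(1) by simp
    finally show "c \<in> {..Max ((\<lambda>s. card (supp actX s)) ` S)}" by simp
  qed
  have finC: "finite ?C" using bnd finite_subset by blast
  obtain u0 where "f u0 = v" using assms(6) by (metis surjD)
  then have ne: "?C \<noteq> {}" by auto
  have "Max ?C \<in> ?C" using finC ne by (rule Max_in)
  then obtain u where u: "f u = v" "card (supp actX u) = Max ?C" by auto
  have "f_safe actX f u" unfolding f_safe_def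
  proof (intro allI impI)
    fix w assume "f w = f u"
    then have "card (supp actX w) \<in> ?C" using u by auto
    then show "card (supp actX w) \<le> card (supp actX u)" using u finC by simp
  qed
  then show "\<exists>u. f u = v \<and> f_safe actX f u" using u by blast
qed

end
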